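(* Let $S,Y,Y^*$ be independent random variables. Suppose $S\ge0$ has a distribution with right endpoint equal to $1$. Suppose that $Y$ has a rapidly varying tail, i.e. $\mathbb{P}(Y>u)>0$ for all $u$ and $\lim_{u\to\infty}\mathbb{P}(Y>\lambda u)/\mathbb{P}(Y>u)=0$ for every $\lambda>1$, and that $\mathbb{P}(Y>u)\sim L(u)\mathbb{P}(Y^*>u)$ as $u\to\infty$ for some function $L(\cdot)$ slowly varying at infinity. Then for every $w\in(0,1)$, $$\mathbb{P}(SY>u)\sim\mathbb{P}(SY>u,\,S>w)\sim L(u)\,\mathbb{P}(SY^*>u),\qquad u\to\infty.$$
   Context: $f_1(u)\sim f_2(u)$ means $\lim_{u\to\infty}f_1(u)/f_2(u)=1$. A function $L$ is slowly varying at infinity if $\lim_{u\to\infty}L(ux)/L(u)=1$ for all $x>0$. *)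

theory Defs
  imports "HOL-Probability.Probability" "HOL-Library.Landau_Symbols"
begin

definition slowly_varying :: "(real \<Rightarrow> real) \<Rightarrow> bool" where
  "slowly_varying L \<longleftrightarrow> (\<forall>x>0. ((\<lambda>u. L (u * x) / L u) \<longlongrightarrow> 1) at_top)"

definition right_endpoint :: "'a measure \<Rightarrow> ('a \<Rightarrow> real) \<Rightarrow> ereal" where
  "right_endpoint M X = (SUP x\<in>{x. measure M {\<omega>\<in>space M. X \<omega> \<le> x} < 1}. ereal x)"

definition rapidly_varying_tail :: "'a measure \<Rightarrow> ('a \<Rightarrow> real) \<Rightarrow> bool" where
  "rapidly_varying_tail M Y \<longleftrightarrow>
     (\<forall>u. measure M {\<omega>\<in>space M. Y \<omega> > u} > 0) \<and>
     (\<forall>c>1. ((\<lambda>u. measure M {\<omega>\<in>space M. Y \<omega> > c * u} / measure M {\<omega>\<in>space M. Y \<omega> > u})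
                 \<longlongrightarrow> 0) at_top)"

end

theory Submission
  imports Defs
begin


lemma (in prob_space) indep_var_pair:
  assumes "indep_vars (\<lambda>_. borel) X I" "i \<in> I" "j \<in> I" "i \<noteq> j"
  shows "indep_var borel (X i) borel (X j)"
proof -
  have "indep_var borel ((\<lambda>f. f i) \<circ> (\<lambda>\<omega>. restrict (\<lambda>i. X i \<omega>) {i}))
     borel ((\<lambda>f. f j) \<circ> (\<lambda>\<omega>. restrict (\<lambda>i. X i \<omega>) {j}))"
    using assms by (intro indep_var_compose[OF indep_var_restrict[OF assms(1)]]) auto
  then show ?thesis by (simp add: comp_def)
qed

lemma (in prob_space) tail_compare:
  fixes S Z Z' :: "'a \<Rightarrow> real"
  assumes ind1: "indep_var borel S borel Z" and ind2: "indep_var borel S borel Z'"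
   and C: "C \<in> sets (borel \<Otimes>\<^sub>M borel)" and K: "K \<ge> 0"
   and le: "\<And>s. prob {\<omega>\<in>space M. Z \<omega> \<in> Pair s -` C} \<le> K * prob {\<omega>\<in>space M. Z' \<omega> \<in> Pair s -` C}"
  shows "prob {\<omega>\<in>space M. (S \<omega>, Z \<omega>) \<in> C} \<le> K * prob {\<omega>\<in>space M. (S \<omega>, Z' \<omega>) \<in> C}"
proof -
  have rS: "random_variable borel S" and rZ: "random_variable borel Z" using ind1 by (blast dest: indep_var_rv1 indep_var_rv2)+
  have rZ': "random_variable borel Z'" using ind2 by (blast dest: indep_var_rv2)
  have eq1: "distr M borel S \<Otimes>\<^sub>M distr M borel Z = distr M (borel \<Otimes>\<^sub>M borel) (\<lambda>x. (S x, Z x))"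
    using ind1 indep_var_distribution_eq by blast
  have eq2: "distr M borel S \<Otimes>\<^sub>M distr M borel Z' = distr M (borel \<Otimes>\<^sub>M borel) (\<lambda>x. (S x, Z' x))"
    using ind2 indep_var_distribution_eq by blast
  interpret DS: prob_space "distr M borel S" by (rule prob_space_distr) fact
  interpret DZ: prob_space "distr M borel Z" by (rule prob_space_distr) fact
  interpret DZ': prob_space "distr M borel Z'" by (rule prob_space_distr) fact
  have sC1: "C \<in> sets (distr M borel S \<Otimes>\<^sub>M distr M borel Z)"
    using C by (metis sets_distr sets_pair_measure_cong)
  have sC2: "C \<in> sets (distr M borel S \<Otimes>\<^sub>M distr M borel Z')"
    using C by (metis sets_distr sets_pair_measure_cong)
  have sec: "Pair s -` C \<in> sets borel" for s using C by (rule sets_Pair1)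
  have e1: "emeasure M {\<omega>\<in>space M. (S \<omega>, Z \<omega>) \<in> C} = emeasure (distr M borel S \<Otimes>\<^sub>M distr M borel Z) C"
    unfolding eq1 using C rS rZ
    by (subst emeasure_distr) (auto intro!: arg_cong[where f="emeasure M"] measurable_Pair)
  have e2: "emeasure M {\<omega>\<in>space M. (S \<omega>, Z' \<omega>) \<in> C} = emeasure (distr M borel S \<Otimes>\<^sub>M distr M borel Z') C"
    unfolding eq2 using C rS rZ'
    by (subst emeasure_distr) (auto intro!: arg_cong[where f="emeasure M"] measurable_Pair)
  have "emeasure M {\<omega>\<in>space M. (S \<omega>, Z \<omega>) \<in> C} = (\<integral>\<^sup>+s. emeasure (distr M borel Z) (Pair s -` C) \<partial>distr M borel S)"
    using e1 DZ.emeasure_pair_measure_alt[OF sC1] by simp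
  also have "\<dots> \<le> (\<integral>\<^sup>+s. ennreal K * emeasure (distr M borel Z') (Pair s -` C) \<partial>distr M borel S)"
  proof (rule nn_integral_mono)
    fix s
    have a: "emeasure (distr M borel Z) (Pair s -` C) = ennreal (prob {\<omega>\<in>space M. Z \<omega> \<in> Pair s -` C})"
      using rZ sec[of s] by (subst emeasure_distr) (auto simp: emeasure_eq_measure vimage_def Int_def conj_commute intro!: arg_cong[where f=measure] arg_cong[where f=ennreal])
    have b: "emeasure (distr M borel Z') (Pair s -` C) = ennreal (prob {\<omega>\<in>space M. Z' \<omega> \<in> Pair s -` C})"
      using rZ' sec[of s] by (subst emeasure_distr) (auto simp: emeasure_eq_measure vimage_def Int_def conj_commute intro!: arg_cong[where f=measure] arg_cong[where f=ennreal])
    show "emeasure (distr M borel Z) (Pair s -` C) \<le> ennreal K * emeasure (distr M borel Z') (Pair s -` C)"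
      unfolding a b using le[of s] K by (simp add: ennreal_mult[symmetric])
  qed
  also have "\<dots> = ennreal K * (\<integral>\<^sup>+s. emeasure (distr M borel Z') (Pair s -` C) \<partial>distr M borel S)"
    by (rule nn_integral_cmult) (rule DZ'.measurable_emeasure_Pair[OF sC2])
  also have "\<dots> = ennreal K * emeasure M {\<omega>\<in>space M. (S \<omega>, Z' \<omega>) \<in> C}"
    using e2 DZ'.emeasure_pair_measure_alt[OF sC2] by simp
  finally show ?thesis using K by (simp add: emeasure_eq_measure ennreal_mult[symmetric])
qed



lemma UCT_additive:
  fixes h :: "real \<Rightarrow> real"
  assumes hm[measurable]: "h \<in> borel_measurable borel"
    and conv: "\<And>t. ((\<lambda>y. h (y + t) - h y) \<longlongrightarrow> 0) at_top"
    and T: "T > 0" and e: "\<epsilon> > 0"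
  shows "eventually (\<lambda>y. \<forall>t\<in>{0..T}. \<bar>h (y+t) - h y\<bar> < \<epsilon>) at_top"
proof (rule ccontr)
  assume "\<not> ?thesis"
  then have "\<forall>n::nat. \<exists>y. y \<ge> real n \<and> (\<exists>t\<in>{0..T}. \<bar>h (y+t) - h y\<bar> \<ge> \<epsilon>)"
    by (auto simp: eventually_at_top_linorder not_less)
  then obtain x t where x: "\<And>n. x n \<ge> real n" and t: "\<And>n. t n \<in> {0..T}"
      and bad: "\<And>n. \<bar>h (x n + t n) - h (x n)\<bar> \<ge> \<epsilon>"
    by metis
  have xlim: "filterlim x at_top sequentially"
    by (rule filterlim_at_top_mono[OF filterlim_real_sequentially]) (use x in auto)
  have xtlim: "filterlim (\<lambda>n. x n + t n) at_top sequentially"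
    by (rule filterlim_at_top_mono[OF filterlim_real_sequentially]) (use x t in \<open>fastforce intro!: always_eventually add_increasing2\<close>)
  define U where "U n = {s\<in>{0..2*T}. \<forall>m\<ge>n. \<bar>h (x m + s) - h (x m)\<bar> < \<epsilon>/2}" for n
  define V where "V n = {s\<in>{0..2*T}. \<forall>m\<ge>n. \<bar>h (x m + t m + s) - h (x m + t m)\<bar> < \<epsilon>/2}" for n
  have Ueq: "U n = {0..2*T} \<inter> (\<Inter>m\<in>{n..}. {s. \<bar>h (x m + s) - h (x m)\<bar> < \<epsilon>/2})" for n
    by (auto simp: U_def)
  have Veq: "V n = {0..2*T} \<inter> (\<Inter>m\<in>{n..}. {s. \<bar>h (x m + t m + s) - h (x m + t m)\<bar> < \<epsilon>/2})" for n
    by (auto simp: V_def)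
  have Um: "U n \<in> sets lborel" for n
  proof -
    have "{s. \<bar>h (x m + s) - h (x m)\<bar> < \<epsilon>/2} \<in> sets borel" for m
    proof -
      have "{s \<in> space borel. \<bar>h (x m + s) - h (x m)\<bar> < \<epsilon>/2} \<in> sets borel" by measurable
      then show ?thesis by simp
    qed
    then show ?thesis unfolding Ueq by auto
  qed
  have Vm: "V n \<in> sets lborel" for n
  proof -
    have "{s. \<bar>h (x m + t m + s) - h (x m + t m)\<bar> < \<epsilon>/2} \<in> sets borel" for m
    proof -
      have "{s \<in> space borel. \<bar>h (x m + t m + s) - h (x m + t m)\<bar> < \<epsilon>/2} \<in> sets borel" by measurable
      then show ?thesis by simp
    qed
    then show ?thesis unfolding Veq by auto
  qed
  have Uinc: "incseq U" by (auto simp: incseq_def U_def)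
  have Vinc: "incseq V" by (auto simp: incseq_def V_def)
  have Uun: "(\<Union>n. U n) = {0..2*T}"
  proof
    show "(\<Union>n. U n) \<subseteq> {0..2*T}" by (auto simp: U_def)
    show "{0..2*T} \<subseteq> (\<Union>n. U n)"
    proof
      fix s assume s: "s \<in> {0..2*T}"
      have "((\<lambda>m. h (x m + s) - h (x m)) \<longlongrightarrow> 0) sequentially"
        using filterlim_compose[OF conv[of s] xlim] by simp
      then have "eventually (\<lambda>m. \<bar>h (x m + s) - h (x m)\<bar> < \<epsilon>/2) sequentially"
        using tendstoD[of _ 0 sequentially "\<epsilon>/2"] e by (force simp: dist_real_def)
      then obtain N where "\<forall>m\<ge>N. \<bar>h (x m + s) - h (x m)\<bar> < \<epsilon>/2"
        by (auto simp: eventually_sequentially)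
      then show "s \<in> (\<Union>n. U n)" using s by (auto simp: U_def)
    qed
  qed
  have Vun: "(\<Union>n. V n) = {0..2*T}"
  proof
    show "(\<Union>n. V n) \<subseteq> {0..2*T}" by (auto simp: V_def)
    show "{0..2*T} \<subseteq> (\<Union>n. V n)"
    proof
      fix s assume s: "s \<in> {0..2*T}"
      have "((\<lambda>m. h (x m + t m + s) - h (x m + t m)) \<longlongrightarrow> 0) sequentially"
        using filterlim_compose[OF conv[of s] xtlim] by simp
      then have "eventually (\<lambda>m. \<bar>h (x m + t m + s) - h (x m + t m)\<bar> < \<epsilon>/2) sequentially"
        using tendstoD[of _ 0 sequentially "\<epsilon>/2"] e by (force simp: dist_real_def)
      then obtain N where "\<forall>m\<ge>N. \<bar>h (x m + t m + s) - h (x m + t m)\<bar> < \<epsilon>/2"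
        by (auto simp: eventually_sequentially)
      then show "s \<in> (\<Union>n. V n)" using s by (auto simp: V_def)
    qed
  qed
  have lt: "ennreal (3*T/2) < ennreal (2*T)" using T by (simp add: ennreal_less_iff)
  have "(\<lambda>n. emeasure lborel (U n)) \<longlonglongrightarrow> ennreal (2*T)"
    using Lim_emeasure_incseq[of U lborel] Um Uinc Uun T by auto
  then have ev1: "eventually (\<lambda>n. ennreal (3*T/2) < emeasure lborel (U n)) sequentially"
    using lt by (rule order_tendstoD)
  have "(\<lambda>n. emeasure lborel (V n)) \<longlonglongrightarrow> ennreal (2*T)"
    using Lim_emeasure_incseq[of V lborel] Vm Vinc Vun T by auto
  then have ev2: "eventually (\<lambda>n. ennreal (3*T/2) < emeasure lborel (V n)) sequentially"
    using lt by (rule order_tendstoD)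
  obtain n where n1: "ennreal (3*T/2) < emeasure lborel (U n)" and n2: "ennreal (3*T/2) < emeasure lborel (V n)"
    using eventually_conj[OF ev1 ev2] by (auto simp: eventually_sequentially)
  define W where "W = {s. s - t n \<in> V n}"
  have Wset: "W = (+) (- t n) -` V n \<inter> space lborel" by (auto simp: W_def)
  have Wm: "W \<in> sets lborel"
    unfolding Wset by (rule measurable_sets[OF _ Vm]) simp
  have "emeasure lborel (V n) = emeasure (distr lborel borel ((+) (- t n))) (V n)"
    by (simp add: lborel_distr_plus)
  also have "\<dots> = emeasure lborel W"
    unfolding Wset using Vm by (subst emeasure_distr) auto
  finally have n3: "ennreal (3*T/2) < emeasure lborel W" using n2 by simp
  have UW: "U n \<union> W \<subseteq> {0..3*T}" using t[of n] by (auto simp: U_def W_def V_def)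
  have fin: "emeasure lborel A \<noteq> \<infinity>" if "A \<subseteq> {0..3*T}" "A \<in> sets lborel" for A
  proof -
    have "emeasure lborel A \<le> emeasure lborel {0..3*T}" by (rule emeasure_mono) (use that in auto)
    then show ?thesis using T by (auto simp: top_unique)
  qed
  have finU: "emeasure lborel (U n) \<noteq> \<infinity>" using fin[of "U n"] UW Um by auto
  have finW: "emeasure lborel W \<noteq> \<infinity>" using fin[of W] UW Wm by auto
  have mU: "3*T/2 < measure lborel (U n)" proof -
    have eq: "emeasure lborel (U n) = ennreal (measure lborel (U n))" by (rule emeasure_eq_ennreal_measure[OF finU[unfolded infinity_ennreal_def]])
    have "ennreal (3*T/2) < ennreal (measure lborel (U n))" unfolding eq[symmetric] by (rule n1)
    then show ?thesis using T by (subst (asm) ennreal_less_iff) auto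
  qed
  have mW: "3*T/2 < measure lborel W" proof -
    have eq: "emeasure lborel (W) = ennreal (measure lborel (W))" by (rule emeasure_eq_ennreal_measure[OF finW[unfolded infinity_ennreal_def]])
    have "ennreal (3*T/2) < ennreal (measure lborel (W))" unfolding eq[symmetric] by (rule n3)
    then show ?thesis using T by (subst (asm) ennreal_less_iff) auto
  qed
  have "U n \<inter> W \<noteq> {}"
  proof
    assume dis: "U n \<inter> W = {}"
    have "measure lborel (U n \<union> W) = measure lborel (U n) + measure lborel W"
      using finU finW Um Wm dis by (rule measure_Union)
    moreover have "measure lborel (U n \<union> W) \<le> measure lborel {0..3*T}"
      using UW Um Wm T by (intro measure_mono_fmeasurable) (auto simp: fmeasurable_def)
    ultimately show False using mU mW T by simp
  qed
  then obtain s where sU: "s \<in> U n" and sW: "s \<in> W" by blast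
  have a: "\<bar>h (x n + s) - h (x n)\<bar> < \<epsilon>/2" using sU by (auto simp: U_def)
  have b: "\<bar>h (x n + t n + (s - t n)) - h (x n + t n)\<bar> < \<epsilon>/2" using sW by (auto simp: W_def V_def)
  have "x n + t n + (s - t n) = x n + s" by simp
  with b have b': "\<bar>h (x n + s) - h (x n + t n)\<bar> < \<epsilon>/2" by simp
  from a b' bad[of n] show False by linarith
qed



lemma mult_at_top_const: "(x::real) > 0 \<Longrightarrow> filterlim (\<lambda>u. u * x) at_top at_top"
proof -
  assume x: "x > 0"
  have "filterlim (\<lambda>u. x * u) at_top at_top"
    by (rule filterlim_tendsto_pos_mult_at_top[OF tendsto_const]) (use x in \<open>auto intro: filterlim_ident\<close>)
  then show ?thesis by (simp add: mult.commute)
qed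

lemma aux_ineq:
  fixes s z u w :: real
  assumes "s \<ge> 0" "s * z > u" "u > 0" "s \<le> w" "w > 0"
  shows "z > u / w"
proof -
  have "s > 0" using assms by (metis less_eq_real_def mult_zero_left order_less_asym)
  then have "z > 0" using assms zero_less_mult_pos[of s z] by linarith
  then have "w * z \<ge> s * z" using assms by (simp add: mult_right_mono)
  then have "w * z > u" using assms by linarith
  then show ?thesis using assms by (simp add: pos_divide_less_eq mult.commute)
qed

lemma (in prob_space) tail_split:
  fixes S Z :: "'a \<Rightarrow> real"
  assumes ind: "indep_var borel S borel Z"
    and Snn: "AE \<omega> in M. S \<omega> \<ge> 0"
    and Spos: "\<And>x. x < 1 \<Longrightarrow> prob {\<omega>\<in>space M. S \<omega> > x} > 0"
    and rv: "rapidly_varying_tail M Z"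
    and w: "0 < w" "w < 1"
  shows "(\<lambda>u. prob {\<omega>\<in>space M. S \<omega> * Z \<omega> > u}) \<sim>[at_top] (\<lambda>u. prob {\<omega>\<in>space M. S \<omega> * Z \<omega> > u \<and> S \<omega> > w})"
    and "\<And>u. u > 0 \<Longrightarrow> prob {\<omega>\<in>space M. S \<omega> * Z \<omega> > u \<and> S \<omega> > w} > 0"
proof -
  have rS[measurable]: "S \<in> borel_measurable M" and rZ[measurable]: "Z \<in> borel_measurable M"
    using ind by (blast dest: indep_var_rv1 indep_var_rv2)+
  define A where "A u = prob {\<omega>\<in>space M. Z \<omega> > u}" for u
  define f where "f u = prob {\<omega>\<in>space M. S \<omega> * Z \<omega> > u}" for u
  define f1 where "f1 u = prob {\<omega>\<in>space M. S \<omega> * Z \<omega> > u \<and> S \<omega> > w}" for u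
  have Apos: "A u > 0" for u using rv by (auto simp: rapidly_varying_tail_def A_def)
  define w' where "w' = (1 + w) / 2"
  have w': "w < w'" "w' < 1" "0 < w'" using w by (auto simp: w'_def)
  define p where "p = prob {\<omega>\<in>space M. S \<omega> > w'}"
  have p: "p > 0" using Spos[OF w'(2)] by (simp add: p_def)
  have lowb: "p * A (u / w') \<le> f1 u" if u: "u > 0" for u
  proof -
    have "p * A (u / w') = \<P>(x in M. S x \<in> {w'<..} \<and> Z x \<in> {u/w'<..})"
      unfolding p_def A_def
      by (subst prob_indep_random_variable[OF ind]) auto
    also have "\<dots> \<le> f1 u" unfolding f1_def
    proof (rule finite_measure_mono)
      show "{x \<in> space M. S x \<in> {w'<..} \<and> Z x \<in> {u / w'<..}} \<subseteq> {\<omega> \<in> space M. S \<omega> * Z \<omega> > u \<and> S \<omega> > w}"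
      proof -
        have key: "u < S x * Z x" if x: "S x > w'" "Z x > u / w'" for x
        proof -
          have "w' * (u / w') < S x * Z x"
            using x w' u by (intro mult_strict_mono) (auto intro: divide_nonneg_pos less_imp_le)
          then show "u < S x * Z x" using w' by simp
        qed
        show ?thesis using key w' by auto
      qed
    qed measurable
    finally show ?thesis .
  qed
  have f1pos: "f1 u > 0" if "u > 0" for u
    using lowb[OF that] p Apos[of "u/w'"] by (smt (verit) mult_pos_pos)
  have upb: "f u \<le> f1 u + A (u / w)" if u: "u > 0" for u
  proof -
    have "f u \<le> prob ({\<omega>\<in>space M. S \<omega> * Z \<omega> > u \<and> S \<omega> > w} \<union> {\<omega>\<in>space M. Z \<omega> > u / w})"
      unfolding f_def
    proof (rule finite_measure_mono_AE)
      show "AE x in M. x \<in> {\<omega> \<in> space M. u < S \<omega> * Z \<omega>} \<longrightarrow>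
          x \<in> {\<omega> \<in> space M. u < S \<omega> * Z \<omega> \<and> w < S \<omega>} \<union> {\<omega> \<in> space M. u / w < Z \<omega>}"
        using Snn
      proof eventually_elim
        case (elim x)
        then show ?case using aux_ineq[where s="S x" and z="Z x" and u=u and w=w] u w by (force simp: not_less)
      qed
    qed measurable
    also have "\<dots> \<le> f1 u + A (u / w)" unfolding f1_def A_def
      by (rule measure_Un_le) measurable
    finally show ?thesis .
  qed
  have f1f: "f1 u \<le> f u" for u unfolding f1_def f_def
    by (rule finite_measure_mono) (auto)
  have c: "w' / w > 1" using w w' by simp
  have lim0: "((\<lambda>u. A (u / w) / A (u / w')) \<longlongrightarrow> 0) at_top"
  proof -
    have "((\<lambda>v. A ((w'/w) * v) / A v) \<longlongrightarrow> 0) at_top"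
      using rv c unfolding rapidly_varying_tail_def A_def by blast
    then have "((\<lambda>u. A ((w'/w) * (u * (1/w'))) / A (u * (1/w'))) \<longlongrightarrow> 0) at_top"
      by (rule filterlim_compose) (rule mult_at_top_const, use w' in simp)
    moreover have "(w'/w) * (u * (1/w')) = u / w" for u using w' w by (simp add: field_simps)
    ultimately show ?thesis by simp
  qed
  have rat: "((\<lambda>u. f u / f1 u) \<longlongrightarrow> 1) at_top"
  proof (rule tendsto_sandwich[of "\<lambda>_. 1" _ _ "\<lambda>u. 1 + (A (u / w) / A (u / w')) / p"])
    show "eventually (\<lambda>u. 1 \<le> f u / f1 u) at_top"
      using eventually_gt_at_top[of 0]
      by eventually_elim (use f1f f1pos in auto)
    show "eventually (\<lambda>u. f u / f1 u \<le> 1 + (A (u / w) / A (u / w')) / p) at_top"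
      using eventually_gt_at_top[of 0]
    proof eventually_elim
      case (elim u)
      have f1p: "f1 u > 0" using f1pos elim by auto
      have Ap: "A (u/w') > 0" by (rule Apos)
      have "f u / f1 u \<le> (f1 u + A (u / w)) / f1 u"
        using upb[OF elim] f1p by (simp add: divide_right_mono)
      also have "\<dots> = 1 + A (u/w) / f1 u" using f1p by (simp add: field_simps)
      also have "A (u/w) / f1 u \<le> A (u/w) / (p * A (u / w'))"
        using lowb[OF elim] Apos[of "u/w"] p Ap f1p by (intro divide_left_mono) auto
      also have "\<dots> = (A (u / w) / A (u / w')) / p" by simp
      finally show ?case by simp
    qed
    show "((\<lambda>_. 1::real) \<longlongrightarrow> 1) at_top" by simp
    show "((\<lambda>u. 1 + (A (u / w) / A (u / w')) / p) \<longlongrightarrow> 1) at_top"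
      using tendsto_add[OF tendsto_const[of 1] tendsto_divide[OF lim0 tendsto_const[of p]]] p by simp
  qed
  show "(\<lambda>u. prob {\<omega>\<in>space M. S \<omega> * Z \<omega> > u}) \<sim>[at_top] (\<lambda>u. prob {\<omega>\<in>space M. S \<omega> * Z \<omega> > u \<and> S \<omega> > w})"
    using asymp_equivI'[OF rat] unfolding f_def f1_def .
  show "\<And>u. u > 0 \<Longrightarrow> prob {\<omega>\<in>space M. S \<omega> * Z \<omega> > u \<and> S \<omega> > w} > 0"
    using f1pos unfolding f1_def .
qed



lemma UCT_mult:
  fixes g :: "real \<Rightarrow> real"
  assumes gm[measurable]: "g \<in> borel_measurable borel" and gpos: "\<And>t. g t > 0"
    and sv: "\<And>x. x > 0 \<Longrightarrow> ((\<lambda>u. g (u * x) / g u) \<longlongrightarrow> 1) at_top"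
    and w: "0 < w" "w < 1" and e: "\<epsilon> > 0"
  shows "eventually (\<lambda>u. \<forall>s\<in>{w..1}. (1 - \<epsilon>) * g u \<le> g (u / s) \<and> g (u / s) \<le> (1 + \<epsilon>) * g u) at_top"
proof -
  define h where "h y = ln (g (exp y))" for y
  have hm: "h \<in> borel_measurable borel" unfolding h_def by measurable
  have conv: "((\<lambda>y. h (y + t) - h y) \<longlongrightarrow> 0) at_top" for t
  proof -
    have "((\<lambda>y. g (exp y * exp t) / g (exp y)) \<longlongrightarrow> 1) at_top"
      using filterlim_compose[OF sv[of "exp t"] exp_at_top] by simp
    then have "((\<lambda>y. ln (g (exp y * exp t) / g (exp y))) \<longlongrightarrow> ln 1) at_top"
      by (rule tendsto_ln) simp
    moreover have "ln (g (exp y * exp t) / g (exp y)) = h (y + t) - h y" for y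
      unfolding h_def using gpos[of "exp y * exp t"] gpos[of "exp y"] by (simp add: ln_div exp_add)
    ultimately show ?thesis by simp
  qed
  define T where "T = - ln w"
  have T: "T > 0" using w by (simp add: T_def)
  define \<delta> where "\<delta> = ln (1 + \<epsilon>)"
  have d: "\<delta> > 0" using e by (simp add: \<delta>_def)
  have ev: "eventually (\<lambda>y. \<forall>t\<in>{0..T}. \<bar>h (y+t) - h y\<bar> < \<delta>) at_top"
    by (rule UCT_additive[OF hm conv T d])
  have ev2: "eventually (\<lambda>u. \<forall>t\<in>{0..T}. \<bar>h (ln u + t) - h (ln u)\<bar> < \<delta>) at_top"
    by (rule eventually_compose_filterlim[OF ev ln_at_top])
  show ?thesis
    using ev2 eventually_gt_at_top[of 0]
  proof eventually_elim
    case (elim u)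
    show ?case
    proof
      fix s assume s: "s \<in> {w..1}"
      have s0: "s > 0" using s w by auto
      define t where "t = - ln s"
      have t: "t \<in> {0..T}" using s s0 w unfolding t_def T_def by auto
      have "exp (ln u + t) = u / s" using elim s0 by (simp add: t_def exp_diff)
      then have hh: "h (ln u + t) = ln (g (u / s))" by (simp add: h_def)
      have hu: "h (ln u) = ln (g u)" using elim by (simp add: h_def)
      have b: "\<bar>ln (g (u / s)) - ln (g u)\<bar> < \<delta>" using elim t hh hu by force
      have gu: "g u > 0" and gus: "g (u/s) > 0" by (rule gpos)+
      have up: "g (u/s) < (1 + \<epsilon>) * g u"
      proof -
        have "ln (g (u/s)) < ln ((1 + \<epsilon>) * g u)" using b gu e by (simp add: ln_mult \<delta>_def)
        then show ?thesis using gu gus e by simp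
      qed
      have lo: "g u / (1 + \<epsilon>) < g (u/s)"
      proof -
        have "ln (g u / (1 + \<epsilon>)) < ln (g (u/s))" using b gu e by (simp add: ln_div \<delta>_def)
        then show ?thesis using gu gus e by simp
      qed
      have "(1 - \<epsilon>) * g u \<le> g u / (1 + \<epsilon>)"
      proof -
        have "(1 - \<epsilon>) * (1 + \<epsilon>) \<le> 1" by (simp add: algebra_simps)
        then have "(1 - \<epsilon>) * (1 + \<epsilon>) * g u \<le> g u" using gu by (simp add: mult_le_cancel_right1)
        then show ?thesis using e by (simp add: field_simps)
      qed
      then show "(1 - \<epsilon>) * g u \<le> g (u / s) \<and> g (u / s) \<le> (1 + \<epsilon>) * g u" using up lo by simp
    qed
  qed
qed



lemma (in prob_space) compare_main:
  fixes S Y Ys :: "'a \<Rightarrow> real" and g :: "real \<Rightarrow> real"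
  assumes indY: "indep_var borel S borel Y" and indYs: "indep_var borel S borel Ys"
    and S1: "AE \<omega> in M. S \<omega> \<le> 1" and w: "0 < w" "w < 1"
    and gm: "g \<in> borel_measurable borel" and gpos: "\<And>t. g t > 0"
    and sv: "\<And>x. x > 0 \<Longrightarrow> ((\<lambda>u. g (u * x) / g u) \<longlongrightarrow> 1) at_top"
    and hA: "\<And>t. prob {\<omega>\<in>space M. Y \<omega> > t} = g t * prob {\<omega>\<in>space M. Ys \<omega> > t}"
    and f1spos: "\<And>u. u > 0 \<Longrightarrow> prob {\<omega>\<in>space M. S \<omega> * Ys \<omega> > u \<and> S \<omega> > w} > 0"
  shows "(\<lambda>u. prob {\<omega>\<in>space M. S \<omega> * Y \<omega> > u \<and> S \<omega> > w})
          \<sim>[at_top] (\<lambda>u. g u * prob {\<omega>\<in>space M. S \<omega> * Ys \<omega> > u \<and> S \<omega> > w})"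
proof -
  have rS[measurable]: "S \<in> borel_measurable M" and rY[measurable]: "Y \<in> borel_measurable M"
    using indY by (blast dest: indep_var_rv1 indep_var_rv2)+
  have rYs[measurable]: "Ys \<in> borel_measurable M" using indYs by (blast dest: indep_var_rv2)
  define A where "A t = prob {\<omega>\<in>space M. Y \<omega> > t}" for t
  define B where "B t = prob {\<omega>\<in>space M. Ys \<omega> > t}" for t
  define f1 where "f1 u = prob {\<omega>\<in>space M. S \<omega> * Y \<omega> > u \<and> S \<omega> > w}" for u
  define f1s where "f1s u = prob {\<omega>\<in>space M. S \<omega> * Ys \<omega> > u \<and> S \<omega> > w}" for u
  define C where "C u = {x \<in> space (borel \<Otimes>\<^sub>M borel). w < fst x \<and> fst x \<le> (1::real) \<and> fst x * snd x > (u::real)}" for u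
  have Cm: "C u \<in> sets (borel \<Otimes>\<^sub>M borel)" for u unfolding C_def by measurable
  have Bnn: "B t \<ge> 0" for t by (simp add: B_def)
  have sec: "Pair s -` C u = (if w < s \<and> s \<le> 1 then {y. y > u / s} else {})" for s u
    using w by (auto simp: C_def space_pair_measure pos_divide_less_eq mult.commute)
  have eqY: "f1 u = prob {\<omega>\<in>space M. (S \<omega>, Y \<omega>) \<in> C u}" for u
    unfolding f1_def C_def
    by (rule measure_eq_AE) (use S1 in \<open>auto simp: space_pair_measure elim!: eventually_mono\<close>)
  have eqYs: "f1s u = prob {\<omega>\<in>space M. (S \<omega>, Ys \<omega>) \<in> C u}" for u
    unfolding f1s_def C_def
    by (rule measure_eq_AE) (use S1 in \<open>auto simp: space_pair_measure elim!: eventually_mono\<close>)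
  have bounds: "(1 - \<epsilon>) * (g u * f1s u) \<le> f1 u \<and> f1 u \<le> (1 + \<epsilon>) * (g u * f1s u)"
    if e: "0 < \<epsilon>" "\<epsilon> < 1" and u: "u > 0"
      and E: "\<forall>s\<in>{w..1}. (1 - \<epsilon>) * g u \<le> g (u / s) \<and> g (u / s) \<le> (1 + \<epsilon>) * g u" for \<epsilon> u
  proof
    have gu: "g u > 0" by (rule gpos)
    have "prob {\<omega>\<in>space M. (S \<omega>, Y \<omega>) \<in> C u} \<le> ((1 + \<epsilon>) * g u) * prob {\<omega>\<in>space M. (S \<omega>, Ys \<omega>) \<in> C u}"
    proof (rule tail_compare[OF indY indYs Cm])
      show "0 \<le> (1 + \<epsilon>) * g u" using e gu by simp
      fix s
      show "prob {\<omega> \<in> space M. Y \<omega> \<in> Pair s -` C u} \<le> (1 + \<epsilon>) * g u * prob {\<omega> \<in> space M. Ys \<omega> \<in> Pair s -` C u}"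
      proof (cases "w < s \<and> s \<le> 1")
        case True
        have "prob {\<omega> \<in> space M. Y \<omega> \<in> Pair s -` C u} = g (u/s) * B (u/s)"
          using True by (simp add: sec hA B_def)
        also have "\<dots> \<le> ((1 + \<epsilon>) * g u) * B (u/s)"
          using E True Bnn by (intro mult_right_mono) auto
        also have "\<dots> = (1 + \<epsilon>) * g u * prob {\<omega> \<in> space M. Ys \<omega> \<in> Pair s -` C u}"
          using True by (simp add: sec B_def)
        finally show ?thesis .
      qed (auto simp: sec)
    qed
    then show "f1 u \<le> (1 + \<epsilon>) * (g u * f1s u)" unfolding eqY eqYs by (simp add: mult.assoc)
    have "prob {\<omega>\<in>space M. (S \<omega>, Ys \<omega>) \<in> C u} \<le> (1 / ((1 - \<epsilon>) * g u)) * prob {\<omega>\<in>space M. (S \<omega>, Y \<omega>) \<in> C u}"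
    proof (rule tail_compare[OF indYs indY Cm])
      show "0 \<le> 1 / ((1 - \<epsilon>) * g u)" using e gu by simp
      fix s
      show "prob {\<omega> \<in> space M. Ys \<omega> \<in> Pair s -` C u} \<le> 1 / ((1 - \<epsilon>) * g u) * prob {\<omega> \<in> space M. Y \<omega> \<in> Pair s -` C u}"
      proof (cases "w < s \<and> s \<le> 1")
        case True
        have le: "(1 - \<epsilon>) * g u \<le> g (u/s)" using E True by auto
        have pos: "(1 - \<epsilon>) * g u > 0" using e gu by simp
        have "(1 - \<epsilon>) * g u * B (u/s) \<le> g (u/s) * B (u/s)"
          using le Bnn by (rule mult_right_mono)
        then have "B (u/s) \<le> 1 / ((1 - \<epsilon>) * g u) * (g (u/s) * B (u/s))"
          using pos by (simp add: field_simps)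
        then show ?thesis using True by (simp add: sec hA B_def)
      qed (auto simp: sec)
    qed
    then have "f1s u \<le> f1 u / ((1 - \<epsilon>) * g u)" unfolding eqY eqYs by simp
    then show "(1 - \<epsilon>) * (g u * f1s u) \<le> f1 u"
      using e gu by (simp add: field_simps)
  qed
  have rat: "((\<lambda>u. f1 u / (g u * f1s u)) \<longlongrightarrow> 1) at_top"
  proof (rule tendstoI)
    fix \<epsilon> :: real assume e: "\<epsilon> > 0"
    define \<epsilon>' where "\<epsilon>' = min (\<epsilon>/2) (1/2)"
    have e': "0 < \<epsilon>'" "\<epsilon>' < 1" "\<epsilon>' < \<epsilon>" using e by (auto simp: \<epsilon>'_def)
    have ev: "eventually (\<lambda>u. (\<forall>s\<in>{w..1}. (1 - \<epsilon>') * g u \<le> g (u / s) \<and> g (u / s) \<le> (1 + \<epsilon>') * g u) \<and> u > 0) at_top"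
      by (intro eventually_conj UCT_mult[OF gm gpos sv w e'(1)] eventually_gt_at_top)
    show "eventually (\<lambda>u. dist (f1 u / (g u * f1s u)) 1 < \<epsilon>) at_top"
      using ev
    proof (rule eventually_mono)
      fix u assume elim: "(\<forall>s\<in>{w..1}. (1 - \<epsilon>') * g u \<le> g (u / s) \<and> g (u / s) \<le> (1 + \<epsilon>') * g u) \<and> u > 0"
      have D: "g u * f1s u > 0" using gpos[of u] f1spos[of u] elim by (simp add: f1s_def)
      from bounds[of \<epsilon>' u] e' elim
      have b: "(1 - \<epsilon>') * (g u * f1s u) \<le> f1 u" "f1 u \<le> (1 + \<epsilon>') * (g u * f1s u)" by auto
      have "(1 - \<epsilon>') \<le> f1 u / (g u * f1s u)" using b(1) D by (simp add: pos_le_divide_eq)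
      moreover have "f1 u / (g u * f1s u) \<le> 1 + \<epsilon>'" using b(2) D by (simp add: pos_divide_le_eq)
      ultimately show "dist (f1 u / (g u * f1s u)) 1 < \<epsilon>" using e' by (simp add: dist_real_def abs_le_iff)
    qed
  qed
  show ?thesis using asymp_equivI'[OF rat] unfolding f1_def f1s_def .
qed



lemma (in prob_space) endpoint_facts:
  fixes S :: "'a \<Rightarrow> real"
  assumes rS[measurable]: "S \<in> borel_measurable M" and re: "right_endpoint M S = 1"
  shows "\<And>x. x < 1 \<Longrightarrow> prob {\<omega>\<in>space M. S \<omega> > x} > 0"
    and "AE \<omega> in M. S \<omega> \<le> 1"
proof -
  define F where "F x = prob {\<omega>\<in>space M. S \<omega> \<le> x}" for x
  have Fc: "F x = 1 - prob {\<omega>\<in>space M. S \<omega> > x}" for x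
  proof -
    have "{\<omega>\<in>space M. S \<omega> \<le> x} = space M - {\<omega>\<in>space M. S \<omega> > x}" by auto
    then show ?thesis unfolding F_def by (simp add: prob_compl)
  qed
  have Fmono: "F x \<le> F y" if "x \<le> y" for x y
    unfolding F_def by (rule finite_measure_mono) (use that in auto)
  have re': "(SUP x\<in>{x. F x < 1}. ereal x) = 1" using re by (simp add: right_endpoint_def F_def)
  show "prob {\<omega>\<in>space M. S \<omega> > x} > 0" if x: "x < 1" for x
  proof (rule ccontr)
    assume "\<not> ?thesis"
    then have "prob {\<omega>\<in>space M. S \<omega> > x} = 0" using measure_nonneg[of M] by (meson antisym not_less)
    then have Fx: "F x = 1" by (simp add: Fc)
    have "(SUP y\<in>{y. F y < 1}. ereal y) \<le> ereal x"
    proof (rule SUP_least)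
      fix y assume "y \<in> {y. F y < 1}"
      then have "F y < 1" by simp
      then have "y < x" using Fmono[of x y] Fx by (cases "x \<le> y") auto
      then show "ereal y \<le> ereal x" by simp
    qed
    then show False using re' x by simp
  qed
  have null: "prob {\<omega>\<in>space M. S \<omega> > y} = 0" if y: "y > 1" for y
  proof -
    have "\<not> F y < 1"
    proof
      assume "F y < 1"
      then have "ereal y \<le> (SUP x\<in>{x. F x < 1}. ereal x)" by (intro SUP_upper) simp
      then show False using re' y by simp
    qed
    moreover have "F y \<le> 1" unfolding F_def by simp
    ultimately have "F y = 1" by simp
    then show ?thesis by (simp add: Fc)
  qed
  have "AE \<omega> in M. S \<omega> \<le> 1 + 1 / real (Suc n)" for n
  proof -
    have "emeasure M {\<omega>\<in>space M. S \<omega> > 1 + 1 / real (Suc n)} = 0"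
      using null[of "1 + 1 / real (Suc n)"] by (simp add: emeasure_eq_measure)
    then show ?thesis
      by (subst AE_iff_measurable[where N="{\<omega>\<in>space M. S \<omega> > 1 + 1 / real (Suc n)}"]) (auto simp: not_le)
  qed
  then have "AE \<omega> in M. \<forall>n. S \<omega> \<le> 1 + 1 / real (Suc n)" by (simp add: AE_all_countable)
  then show "AE \<omega> in M. S \<omega> \<le> 1"
  proof (rule eventually_mono)
    fix \<omega> assume a: "\<forall>n. S \<omega> \<le> 1 + 1 / real (Suc n)"
    show "S \<omega> \<le> 1"
    proof (rule ccontr)
      assume "\<not> S \<omega> \<le> 1"
      then obtain n where "1 / real (Suc n) < S \<omega> - 1" using reals_Archimedean[of "S \<omega> - 1"] \<open>\<not> S \<omega> \<le> 1\<close>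
        by (auto simp: inverse_eq_divide)
      then show False using a[rule_format, of n] by simp
    qed
  qed
qed



theorem lemma4p1:
  fixes M :: "'a measure" and S Y Ystar :: "'a \<Rightarrow> real" and L :: "real \<Rightarrow> real"
  assumes "prob_space M"
    and "S \<in> borel_measurable M" and "Y \<in> borel_measurable M" and "Ystar \<in> borel_measurable M"
    and "prob_space.indep_vars M (\<lambda>_. borel) (\<lambda>i. [S, Y, Ystar] ! i) {0, 1, 2::nat}"
    and "AE \<omega> in M. S \<omega> \<ge> 0"
    and "right_endpoint M S = 1"
    and "rapidly_varying_tail M Y"
    and "slowly_varying L"
    and "(\<lambda>u. measure M {\<omega>\<in>space M. Y \<omega> > u})
           \<sim>[at_top] (\<lambda>u. L u * measure M {\<omega>\<in>space M. Ystar \<omega> > u})"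
    and "0 < w" and "w < 1"
  shows "((\<lambda>u. measure M {\<omega>\<in>space M. S \<omega> * Y \<omega> > u})
           \<sim>[at_top] (\<lambda>u. measure M {\<omega>\<in>space M. S \<omega> * Y \<omega> > u \<and> S \<omega> > w})) \<and>
         ((\<lambda>u. measure M {\<omega>\<in>space M. S \<omega> * Y \<omega> > u \<and> S \<omega> > w})
           \<sim>[at_top] (\<lambda>u. L u * measure M {\<omega>\<in>space M. S \<omega> * Ystar \<omega> > u}))"
proof -
  interpret prob_space M by fact
  note rS[measurable] = assms(2) and rY[measurable] = assms(3) and rYs[measurable] = assms(4)
  have indSY: "indep_var borel S borel Y"
    using indep_var_pair[OF assms(5), of 0 1] by simp
  have indSYs: "indep_var borel S borel Ystar"
    using indep_var_pair[OF assms(5), of 0 2] by simp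
  note Spos = endpoint_facts(1)[OF rS assms(7)]
  note S1 = endpoint_facts(2)[OF rS assms(7)]
  define A where "A t = prob {\<omega>\<in>space M. Y \<omega> > t}" for t
  define B where "B t = prob {\<omega>\<in>space M. Ystar \<omega> > t}" for t
  define g where "g t = A t / B t" for t
  have Apos: "A t > 0" for t using assms(8) by (simp add: rapidly_varying_tail_def A_def)
  have equiv: "A \<sim>[at_top] (\<lambda>u. L u * B u)" using assms(10) unfolding A_def[abs_def] B_def[abs_def] .
  have evLB: "eventually (\<lambda>u. L u * B u \<noteq> 0) at_top"
    using asymp_equiv_eventually_zeros[OF equiv]
    by eventually_elim (use Apos in \<open>metis less_irrefl\<close>)
  have Bmono: "B y \<le> B x" if "x \<le> y" for x y
    unfolding B_def by (rule finite_measure_mono) (use that in auto)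
  have Bpos: "B t > 0" for t
  proof -
    obtain N where N: "\<And>u. u \<ge> N \<Longrightarrow> L u * B u \<noteq> 0" using evLB by (auto simp: eventually_at_top_linorder)
    have "L (max N t) * B (max N t) \<noteq> 0" by (rule N) simp
    then have "B (max N t) \<noteq> 0" by auto
    moreover have "B (max N t) \<ge> 0" by (simp add: B_def)
    ultimately have "B (max N t) > 0" by simp
    then show ?thesis using Bmono[of t "max N t"] by simp
  qed
  have gpos: "g t > 0" for t using Apos[of t] Bpos[of t] by (simp add: g_def)
  have hA: "A t = g t * B t" for t using Bpos[of t] by (simp add: g_def)
  have Amono: "A y \<le> A x" if "x \<le> y" for x y
    unfolding A_def by (rule finite_measure_mono) (use that in auto)
  have Am: "A \<in> borel_measurable borel"
  proof -
    have "(\<lambda>t. - A t) \<in> borel_measurable borel"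
      by (rule borel_measurable_mono) (auto simp: mono_def intro: Amono)
    then have "(\<lambda>t. - (- A t)) \<in> borel_measurable borel" by measurable
    then show ?thesis by simp
  qed
  have Bm: "B \<in> borel_measurable borel"
  proof -
    have "(\<lambda>t. - B t) \<in> borel_measurable borel"
      by (rule borel_measurable_mono) (auto simp: mono_def intro: Bmono)
    then have "(\<lambda>t. - (- B t)) \<in> borel_measurable borel" by measurable
    then show ?thesis by simp
  qed
  have gm: "g \<in> borel_measurable borel" unfolding g_def using Am Bm by measurable
  have AL: "((\<lambda>u. A u / (L u * B u)) \<longlongrightarrow> 1) at_top"
    by (rule asymp_equivD_strong[OF equiv]) (use Apos in \<open>auto intro: always_eventually simp: less_imp_neq[symmetric]\<close>)
  have gL: "((\<lambda>u. g u / L u) \<longlongrightarrow> 1) at_top"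
  proof -
    have "eventually (\<lambda>u. A u / (L u * B u) = g u / L u) at_top"
      using evLB by eventually_elim (simp add: g_def)
    then show ?thesis using AL by (rule Lim_transform_eventually[rotated])
  qed
  have gLeq: "g \<sim>[at_top] L" by (rule asymp_equivI'[OF gL])
  have evL: "eventually (\<lambda>u. L u \<noteq> 0) at_top" using evLB by eventually_elim auto
  have sv: "((\<lambda>u. g (u * x) / g u) \<longlongrightarrow> 1) at_top" if x: "x > 0" for x
  proof -
    have lim1: "((\<lambda>u. g (u * x) / L (u * x)) \<longlongrightarrow> 1) at_top"
      using filterlim_compose[OF gL mult_at_top_const[OF x]] .
    have lim2: "((\<lambda>u. L (u * x) / L u) \<longlongrightarrow> 1) at_top"
      using assms(9) x by (simp add: slowly_varying_def)
    have evL2: "eventually (\<lambda>u. L (u * x) \<noteq> 0) at_top"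
      by (rule eventually_compose_filterlim[OF evL mult_at_top_const[OF x]])
    have "((\<lambda>u. (g (u * x) / L (u * x)) * (L (u * x) / L u) / (g u / L u)) \<longlongrightarrow> 1 * 1 / 1) at_top"
      by (intro tendsto_intros lim1 lim2 gL) simp
    moreover have "eventually (\<lambda>u. (g (u * x) / L (u * x)) * (L (u * x) / L u) / (g u / L u) = g (u * x) / g u) at_top"
      using evL evL2 by eventually_elim (use gpos in \<open>simp add: field_simps less_imp_neq[symmetric]\<close>)
    ultimately show ?thesis using Lim_transform_eventually by force
  qed
  have rvYs: "rapidly_varying_tail M Ystar"
    unfolding rapidly_varying_tail_def
  proof (intro conjI allI impI)
    fix u show "0 < prob {\<omega>\<in>space M. Ystar \<omega> > u}" using Bpos[of u] by (simp add: B_def)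
  next
    fix c :: real assume c: "c > 1"
    have r1: "((\<lambda>u. A (c * u) / A u) \<longlongrightarrow> 0) at_top"
      using assms(8) c by (simp add: rapidly_varying_tail_def A_def)
    have r2: "((\<lambda>u. g u / g (c * u)) \<longlongrightarrow> 1) at_top"
    proof -
      have "((\<lambda>u. inverse (g (u * c) / g u)) \<longlongrightarrow> inverse 1) at_top"
        by (rule tendsto_inverse) (use sv[of c] c in auto)
      then show ?thesis by (simp add: mult.commute)
    qed
    have "((\<lambda>u. (A (c * u) / A u) * (g u / g (c * u))) \<longlongrightarrow> 0 * 1) at_top"
      by (rule tendsto_mult[OF r1 r2])
    moreover have "(A (c * u) / A u) * (g u / g (c * u)) = B (c * u) / B u" for u
      using Bpos[of u] Bpos[of "c*u"] Apos[of u] Apos[of "c*u"] by (simp add: g_def field_simps)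
    ultimately show "((\<lambda>u. prob {\<omega>\<in>space M. Ystar \<omega> > c * u} / prob {\<omega>\<in>space M. Ystar \<omega> > u}) \<longlongrightarrow> 0) at_top"
      by (simp add: B_def)
  qed
  note sp1 = tail_split[OF indSY assms(6) Spos assms(8) assms(11,12)]
  note sp2 = tail_split[OF indSYs assms(6) Spos rvYs assms(11,12)]
  have C: "(\<lambda>u. prob {\<omega>\<in>space M. S \<omega> * Y \<omega> > u \<and> S \<omega> > w})
          \<sim>[at_top] (\<lambda>u. g u * prob {\<omega>\<in>space M. S \<omega> * Ystar \<omega> > u \<and> S \<omega> > w})"
    by (rule compare_main[OF indSY indSYs S1 assms(11,12) gm gpos sv])
       (use hA sp2(2) in \<open>auto simp: A_def B_def\<close>)
  have D: "(\<lambda>u. g u * prob {\<omega>\<in>space M. S \<omega> * Ystar \<omega> > u \<and> S \<omega> > w})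
          \<sim>[at_top] (\<lambda>u. L u * prob {\<omega>\<in>space M. S \<omega> * Ystar \<omega> > u})"
    by (rule asymp_equiv_mult[OF gLeq asymp_equiv_symI[OF sp2(1)]])
  show ?thesis using sp1(1) asymp_equiv_trans[OF C D] by simp
qed

end
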